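(* Let $D$ be a nonempty subset of $\mathbb{R}^n$, let $\varepsilon\in\,]0,1[$, and let $\Lambda$ be a symmetric linear operator on $\mathbb{R}^n$ such that $$\bar\beta\,\mathrm{Id}\succeq \Lambda\succeq \underline{\beta}\,\mathrm{Id},\qquad \bar\beta,\underline\beta\in[\varepsilon,1-\varepsilon].$$ Let $R:D\to\mathbb{R}^n$ be nonexpansive, and define $T_\Lambda:D\to\mathbb{R}^n$ by $T_\Lambda \coloneqq (\mathrm{Id}-\Lambda)+\Lambda R$. Then $T_\Lambda$ is $\bar\beta$-averaged in the metric induced by $\Lambda^{-1}$, i.e., for all $x,y\in D$, $$\|T_\Lambda(x)-T_\Lambda(y)\|_{\Lambda^{-1}}^2\le \|x-y\|_{\Lambda^{-1}}^2-\frac{1-\bar\beta}{\bar\beta}\,\big\|(\mathrm{Id}-T_\Lambda)(x)-(\mathrm{Id}-T_\Lambda)(y)\big\|_{\Lambda^{-1}}^2 .$$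
   Context: For a symmetric positive-definite matrix $W$, $\|x\|_W^2\coloneqq\langle x,Wx\rangle$. An operator $R$ is nonexpansive if $\|R(x)-R(y)\|\le\|x-y\|$ for all $x,y$ in its domain. $A\succeq B$ means $A-B$ is positive semidefinite. Operators $T_\Lambda$ of this form are called operator-weighted averaged operators. *)

theory Defs
  imports "HOL-Analysis.Analysis"
begin

definition wnorm2 :: "real^'n^'n \<Rightarrow> real^'n \<Rightarrow> real" where
  "wnorm2 W x = x \<bullet> (W *v x)"

definition psd :: "real^'n^'n \<Rightarrow> bool" where
  "psd M \<longleftrightarrow> (\<forall>v. 0 \<le> v \<bullet> (M *v v))"

definition loewner_ge :: "real^'n^'n \<Rightarrow> real^'n^'n \<Rightarrow> bool" where
  "loewner_ge A B \<longleftrightarrow> psd (A - B)"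

definition nonexpansive_on :: "(real^'n) set \<Rightarrow> (real^'n \<Rightarrow> real^'n) \<Rightarrow> bool" where
  "nonexpansive_on D R \<longleftrightarrow> (\<forall>x\<in>D. \<forall>y\<in>D. norm (R x - R y) \<le> norm (x - y))"

end

theory Submission
  imports Defs
begin

theorem proposition1:
  fixes D :: "(real^'n) set" and \<epsilon> \<beta>u \<beta>l :: real
    and \<Lambda> :: "real^'n^'n" and R :: "real^'n \<Rightarrow> real^'n"
  assumes "D \<noteq> {}"
    and "0 < \<epsilon>" and "\<epsilon> < 1"
    and "transpose \<Lambda> = \<Lambda>"
    and "loewner_ge (\<beta>u *\<^sub>R mat 1) \<Lambda>"
    and "loewner_ge \<Lambda> (\<beta>l *\<^sub>R mat 1)"
    and "\<epsilon> \<le> \<beta>u" and "\<beta>u \<le> 1 - \<epsilon>"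
    and "\<epsilon> \<le> \<beta>l" and "\<beta>l \<le> 1 - \<epsilon>"
    and "nonexpansive_on D R"
    and "T = (\<lambda>x. (x - \<Lambda> *v x) + \<Lambda> *v R x)"
    and "x \<in> D" and "y \<in> D"
  shows "wnorm2 (matrix_inv \<Lambda>) (T x - T y)
         \<le> wnorm2 (matrix_inv \<Lambda>) (x - y)
            - ((1 - \<beta>u) / \<beta>u) * wnorm2 (matrix_inv \<Lambda>) ((x - T x) - (y - T y))"
proof -
  define W where "W = matrix_inv \<Lambda>"
  have bl: "0 < \<beta>l" and bu: "0 < \<beta>u" using assms by auto
  have adj: "(\<Lambda> *v a) \<bullet> b = a \<bullet> (\<Lambda> *v b)" for a b
  proof -
    have "a v* \<Lambda> = \<Lambda> *v a" using vector_transpose_matrix[of a \<Lambda>] assms(4) by simp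
    then show ?thesis using dot_lmul_matrix[of a \<Lambda> b] by simp
  qed
  have sm: "(c *\<^sub>R mat 1) *v v = c *\<^sub>R v" for c :: real and v :: "real^'n"
    by (metis matrix_vector_mul_lid scaleR_matrix_vector_assoc)
  have lo: "\<beta>l * (v \<bullet> v) \<le> v \<bullet> (\<Lambda> *v v)" for v
  proof -
    have "0 \<le> v \<bullet> ((\<Lambda> - \<beta>l *\<^sub>R mat 1) *v v)"
      using assms(6) unfolding loewner_ge_def psd_def by blast
    then show ?thesis
      by (simp add: matrix_vector_mult_diff_rdistrib inner_diff_right sm)
  qed
  have up: "v \<bullet> (\<Lambda> *v v) \<le> \<beta>u * (v \<bullet> v)" for v
  proof -
    have "0 \<le> v \<bullet> ((\<beta>u *\<^sub>R mat 1 - \<Lambda>) *v v)"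
      using assms(5) unfolding loewner_ge_def psd_def by blast
    then show ?thesis
      by (simp add: matrix_vector_mult_diff_rdistrib inner_diff_right sm)
  qed
  have ker: "\<forall>v. \<Lambda> *v v = 0 \<longrightarrow> v = 0"
  proof (intro allI impI)
    fix v assume "\<Lambda> *v v = 0"
    then have "\<beta>l * (v \<bullet> v) \<le> 0" using lo[of v] by simp
    then have "v \<bullet> v \<le> 0" using bl by (simp add: mult_le_0_iff)
    then show "v = 0" by (metis inner_eq_zero_iff inner_ge_zero order_antisym)
  qed
  then have "invertible \<Lambda>"
    using matrix_left_invertible_ker invertible_left_inverse by blast
  then have "\<Lambda> ** W = mat 1 \<and> W ** \<Lambda> = mat 1"
    unfolding W_def matrix_inv_def invertible_def by (rule someI_ex)
  then have LW: "\<Lambda> *v (W *v v) = v" and WL: "W *v (\<Lambda> *v v) = v" for v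
    by (metis matrix_vector_mul_assoc matrix_vector_mul_lid)+
  define u where "u = x - y"
  define d where "d = u - (R x - R y)"
  define L where "L = \<Lambda> *v d"
  have e1: "T x - T y = u - L"
    unfolding assms(12) u_def L_def d_def
    by (simp add: matrix_vector_mult_diff_distrib algebra_simps)
  have e2: "(x - T x) - (y - T y) = L"
    unfolding assms(12) u_def L_def d_def
    by (simp add: matrix_vector_mult_diff_distrib algebra_simps)
  have w1: "wnorm2 W (u - L) = u \<bullet> (W *v u) - 2 * (u \<bullet> d) + d \<bullet> L"
  proof -
    have "wnorm2 W (u - L) = u \<bullet> (W *v u) - u \<bullet> d - L \<bullet> (W *v u) + L \<bullet> d"
      unfolding wnorm2_def L_def
      by (simp add: matrix_vector_mult_diff_distrib inner_diff_left inner_diff_right WL)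
    also have "L \<bullet> (W *v u) = d \<bullet> u" unfolding L_def using adj LW by simp
    finally show ?thesis by (simp add: inner_commute)
  qed
  have w2: "wnorm2 W L = d \<bullet> L"
    unfolding wnorm2_def L_def by (simp add: WL inner_commute)
  have ne: "norm (u - d) \<le> norm u"
    using assms(11,13,14) unfolding nonexpansive_on_def u_def d_def by auto
  then have "(u - d) \<bullet> (u - d) \<le> u \<bullet> u"
    by (metis norm_ge_zero norm_eq_sqrt_inner power_mono real_sqrt_pow2 inner_ge_zero power2_norm_eq_inner)
  then have dd: "d \<bullet> d \<le> 2 * (u \<bullet> d)"
    by (simp add: inner_diff_left inner_diff_right inner_commute)
  have dL: "d \<bullet> L \<le> \<beta>u * (d \<bullet> d)" unfolding L_def by (rule up)
  have "d \<bullet> L \<le> \<beta>u * (2 * (u \<bullet> d))"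
    using dL dd bu by (smt (verit) mult_left_mono)
  then have key: "d \<bullet> L / \<beta>u \<le> 2 * (u \<bullet> d)" using bu by (simp add: divide_le_eq mult.commute)
  have "(1 - \<beta>u) / \<beta>u * (d \<bullet> L) = d \<bullet> L / \<beta>u - d \<bullet> L"
    using bu by (simp add: field_simps)
  then show ?thesis
    unfolding W_def[symmetric] e1 e2 w1 w2 u_def[symmetric] using key by (simp add: wnorm2_def)
qed

end
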